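(* Let $n,d\in\mathbb N$, let $\{\varepsilon_k^j\}_{1\le j\le n,\,1\le k\le d}$ be independent Rademacher random variables on a probability space $(\Omega,\Sigma,P)$, and for $z\in\mathbb C^d$, $t\in\Omega$ put $F(z,t)=\prod_{j=1}^n\sum_{k=1}^d\varepsilon_k^j(t)z_k$ and $\|F(\cdot,t)\|=\sup_{\|u\|_\infty=1}|F(u,t)|$. Then for every $R>0$, $$P(\|F(\cdot,t)\|>2R)<(24n)^d\,\frac{d^n}{R^2}.$$
   Context: A Rademacher random variable takes values $1$ and $-1$ each with probability $1/2$. $\|\cdot\|_\infty$ is the sup norm on $\mathbb C^d$. *)

theory Defs
  imports "HOL-Probability.Probability"
begin

definition supnorm :: "nat \<Rightarrow> (nat \<Rightarrow> complex) \<Rightarrow> real" where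
  "supnorm d u = Max ((\<lambda>k. cmod (u k)) ` {1..d})"

definition Fpoly :: "nat \<Rightarrow> nat \<Rightarrow> (nat \<Rightarrow> nat \<Rightarrow> 'a \<Rightarrow> real) \<Rightarrow> 'a \<Rightarrow> (nat \<Rightarrow> complex) \<Rightarrow> complex" where
  "Fpoly n d eps t z = (\<Prod>j=1..n. \<Sum>k=1..d. complex_of_real (eps j k t) * z k)"

definition Fnorm :: "nat \<Rightarrow> nat \<Rightarrow> (nat \<Rightarrow> nat \<Rightarrow> 'a \<Rightarrow> real) \<Rightarrow> 'a \<Rightarrow> real" where
  "Fnorm n d eps t = Sup {cmod (Fpoly n d eps t u) | u. supnorm d u = 1}"

end

theory Submission
  imports Defs
begin


definition Sig :: "nat \<Rightarrow> nat \<Rightarrow> (nat \<Rightarrow> nat) set" where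
  "Sig n d = PiE {1..n} (\<lambda>_. {1..d})"
definition cnt :: "nat \<Rightarrow> nat \<Rightarrow> (nat \<Rightarrow> nat) \<Rightarrow> nat \<Rightarrow> nat" where
  "cnt n d \<sigma> = restrict (\<lambda>k. card {j\<in>{1..n}. \<sigma> j = k}) {1..d}"
definition Ms :: "nat \<Rightarrow> nat \<Rightarrow> (nat \<Rightarrow> nat) set" where
  "Ms n d = PiE {1..d} (\<lambda>_. {0..n})"
definition coef :: "nat \<Rightarrow> nat \<Rightarrow> (nat \<Rightarrow> nat \<Rightarrow> real) \<Rightarrow> (nat \<Rightarrow> nat) \<Rightarrow> real" where
  "coef n d a m = (\<Sum>\<sigma>\<in>{\<sigma>\<in>Sig n d. cnt n d \<sigma> = m}. \<Prod>j=1..n. a j (\<sigma> j))"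

lemma finite_Sig[simp]: "finite (Sig n d)" unfolding Sig_def by (simp add: finite_PiE)
lemma finite_Ms[simp]: "finite (Ms n d)" unfolding Ms_def by (simp add: finite_PiE)
lemma card_Sig: "card (Sig n d) = d ^ n" unfolding Sig_def by (simp add: card_PiE)
lemma card_Ms: "card (Ms n d) = (n+1) ^ d" unfolding Ms_def by (simp add: card_PiE)

lemma cnt_in_Ms: "cnt n d \<sigma> \<in> Ms n d"
proof -
  have "card {j\<in>{1..n}. \<sigma> j = k} \<le> n" for k
    by (rule order_trans[OF card_mono[of "{1..n}"]]) auto
  then show ?thesis unfolding cnt_def Ms_def by auto
qed

lemma prod_u_cnt:
  fixes u :: "nat \<Rightarrow> 'b::comm_monoid_mult"
  assumes "\<sigma> \<in> Sig n d"
  shows "(\<Prod>j=1..n. u (\<sigma> j)) = (\<Prod>k=1..d. u k ^ cnt n d \<sigma> k)"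
proof -
  have img: "\<sigma> ` {1..n} \<subseteq> {1..d}" using assms unfolding Sig_def by auto
  have "(\<Prod>j=1..n. u (\<sigma> j)) = (\<Prod>k\<in>{1..d}. \<Prod>j\<in>{j. j \<in> {1..n} \<and> \<sigma> j = k}. u (\<sigma> j))"
    using prod.group[of "{1..n}" "{1..d}" \<sigma> "\<lambda>j. u (\<sigma> j)"] img by simp
  also have "\<dots> = (\<Prod>k=1..d. u k ^ cnt n d \<sigma> k)"
    by (rule prod.cong) (auto simp: cnt_def)
  finally show ?thesis .
qed

lemma expand:
  fixes a :: "nat \<Rightarrow> nat \<Rightarrow> real" and u :: "nat \<Rightarrow> complex"
  shows "(\<Prod>j=1..n. \<Sum>k=1..d. complex_of_real (a j k) * u k)
     = (\<Sum>m\<in>Ms n d. complex_of_real (coef n d a m) * (\<Prod>k=1..d. u k ^ m k))"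
proof -
  have "(\<Prod>j=1..n. \<Sum>k=1..d. complex_of_real (a j k) * u k)
      = (\<Sum>\<sigma>\<in>Sig n d. \<Prod>j=1..n. complex_of_real (a j (\<sigma> j)) * u (\<sigma> j))"
    unfolding Sig_def by (rule prod_sum_PiE) auto
  also have "\<dots> = (\<Sum>\<sigma>\<in>Sig n d. complex_of_real (\<Prod>j=1..n. a j (\<sigma> j)) * (\<Prod>k=1..d. u k ^ cnt n d \<sigma> k))"
    by (rule sum.cong[OF refl]) (simp only: prod.distrib of_real_prod prod_u_cnt)
  also have "\<dots> = (\<Sum>m\<in>Ms n d. \<Sum>\<sigma>\<in>{\<sigma>. \<sigma> \<in> Sig n d \<and> cnt n d \<sigma> = m}. complex_of_real (\<Prod>j=1..n. a j (\<sigma> j)) * (\<Prod>k=1..d. u k ^ cnt n d \<sigma> k))"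
    by (rule sum.group[symmetric]) (auto simp: cnt_in_Ms)
  also have "\<dots> = (\<Sum>m\<in>Ms n d. complex_of_real (coef n d a m) * (\<Prod>k=1..d. u k ^ m k))"
    unfolding coef_def by (rule sum.cong) (auto simp: sum_distrib_right)
  finally show ?thesis .
qed

lemma Fpoly_bound:
  assumes "d \<ge> 1" "supnorm d u = 1"
  shows "cmod (Fpoly n d eps t u) \<le> (\<Sum>m\<in>Ms n d. \<bar>coef n d (\<lambda>j k. eps j k t) m\<bar>)"
proof -
  have uk: "cmod (u k) \<le> 1" if "k \<in> {1..d}" for k
    using assms(2) that unfolding supnorm_def by (metis Max_ge finite_atLeastAtMost finite_imageI image_eqI)
  have mon: "cmod (\<Prod>k=1..d. u k ^ m k) \<le> 1" for m
    unfolding prod_norm[symmetric] norm_power by (rule prod_le_1) (auto intro!: power_le_one uk)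
  have "cmod (Fpoly n d eps t u) = cmod (\<Sum>m\<in>Ms n d. complex_of_real (coef n d (\<lambda>j k. eps j k t) m) * (\<Prod>k=1..d. u k ^ m k))"
    unfolding Fpoly_def by (subst expand) simp
  also have "\<dots> \<le> (\<Sum>m\<in>Ms n d. cmod (complex_of_real (coef n d (\<lambda>j k. eps j k t) m) * (\<Prod>k=1..d. u k ^ m k)))"
    by (rule norm_sum)
  also have "\<dots> \<le> (\<Sum>m\<in>Ms n d. \<bar>coef n d (\<lambda>j k. eps j k t) m\<bar>)"
    by (rule sum_mono) (use mon in \<open>simp add: norm_mult mult_left_le\<close>)
  finally show ?thesis .
qed

lemma Fnorm_bound:
  assumes "d \<ge> 1"
  shows "Fnorm n d eps t \<le> (\<Sum>m\<in>Ms n d. \<bar>coef n d (\<lambda>j k. eps j k t) m\<bar>)"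
proof -
  have "supnorm d (\<lambda>_. 1) = 1" using assms unfolding supnorm_def
    by (simp add: image_constant_conv)
  then show ?thesis unfolding Fnorm_def
    by (intro cSup_least) (auto intro: Fpoly_bound[OF assms])
qed



lemma coef_cong:
  assumes "\<And>j k. j \<in> {1..n} \<Longrightarrow> k \<in> {1..d} \<Longrightarrow> a j k = b j k"
  shows "coef n d a m = coef n d b m"
  unfolding coef_def
  by (intro sum.cong refl prod.cong) (auto simp: Sig_def assms PiE_iff)

lemma sum_card_fibers: "(\<Sum>m\<in>Ms n d. card {\<sigma>\<in>Sig n d. cnt n d \<sigma> = m}) = d ^ n"
proof -
  have "(\<Sum>m\<in>Ms n d. \<Sum>\<sigma>\<in>{\<sigma>. \<sigma>\<in>Sig n d \<and> cnt n d \<sigma> = m}. (1::nat)) = (\<Sum>\<sigma>\<in>Sig n d. 1)"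
    by (rule sum.group) (auto simp: cnt_in_Ms)
  then show ?thesis by (simp add: card_Sig)
qed

context prob_space
begin

lemma pair_expect:
  fixes e :: "nat \<times> nat \<Rightarrow> 'a \<Rightarrow> real"
  assumes ind: "indep_vars (\<lambda>_. borel) e ({1..n} \<times> {1..d})"
    and pm: "\<And>p t. p \<in> {1..n} \<times> {1..d} \<Longrightarrow> e p t = 1 \<or> e p t = -1"
    and int: "\<And>p. p \<in> {1..n} \<times> {1..d} \<Longrightarrow> integrable M (e p)"
    and mean: "\<And>p. p \<in> {1..n} \<times> {1..d} \<Longrightarrow> expectation (e p) = 0"
    and \<sigma>: "\<sigma> \<in> Sig n d" and \<tau>: "\<tau> \<in> Sig n d"
  shows "integrable M (\<lambda>t. (\<Prod>j=1..n. e (j, \<sigma> j) t) * (\<Prod>j=1..n. e (j, \<tau> j) t))"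
    and "expectation (\<lambda>t. (\<Prod>j=1..n. e (j, \<sigma> j) t) * (\<Prod>j=1..n. e (j, \<tau> j) t))
          = (if \<sigma> = \<tau> then 1 else 0)"
proof -
  define J where "J = {j\<in>{1..n}. \<sigma> j \<noteq> \<tau> j}"
  define D1 where "D1 = (\<lambda>j. (j, \<sigma> j)) ` J"
  define D2 where "D2 = (\<lambda>j. (j, \<tau> j)) ` J"
  have sq: "e p t * e p t = 1" if "p \<in> {1..n} \<times> {1..d}" for p t
    using pm[OF that, of t] by auto
  have D1I: "D1 \<subseteq> {1..n} \<times> {1..d}" "D2 \<subseteq> {1..n} \<times> {1..d}"
    using \<sigma> \<tau> unfolding D1_def D2_def J_def Sig_def by (auto simp: PiE_iff)
  have disj: "D1 \<inter> D2 = {}" unfolding D1_def D2_def J_def by auto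
  have fin: "finite D1" "finite D2" unfolding D1_def D2_def J_def by auto
  have eq: "(\<Prod>j=1..n. e (j, \<sigma> j) t) * (\<Prod>j=1..n. e (j, \<tau> j) t) = (\<Prod>p\<in>D1 \<union> D2. e p t)" for t
  proof -
    have "(\<Prod>j=1..n. e (j, \<sigma> j) t) * (\<Prod>j=1..n. e (j, \<tau> j) t)
        = (\<Prod>j=1..n. e (j, \<sigma> j) t * e (j, \<tau> j) t)" by (simp add: prod.distrib)
    also have "\<dots> = (\<Prod>j\<in>J. e (j, \<sigma> j) t * e (j, \<tau> j) t)"
    proof -
      have h: "\<forall>i\<in>{1..n} - J. e (i, \<sigma> i) t * e (i, \<tau> i) t = 1"
      proof
        fix i assume i: "i \<in> {1..n} - J"
        have "\<sigma> i = \<tau> i" using i unfolding J_def by auto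
        moreover have "(i, \<sigma> i) \<in> {1..n} \<times> {1..d}"
          using \<sigma> i unfolding Sig_def by (auto simp: PiE_iff)
        ultimately show "e (i, \<sigma> i) t * e (i, \<tau> i) t = 1" using sq by metis
      qed
      have "J \<subseteq> {1..n}" by (auto simp: J_def)
      from prod.mono_neutral_right[OF finite_atLeastAtMost this h] show ?thesis .
    qed
    also have "\<dots> = (\<Prod>j\<in>J. e (j, \<sigma> j) t) * (\<Prod>j\<in>J. e (j, \<tau> j) t)" by (simp add: prod.distrib)
    also have "\<dots> = (\<Prod>p\<in>D1. e p t) * (\<Prod>p\<in>D2. e p t)"
      unfolding D1_def D2_def by (subst (1 2) prod.reindex) (auto simp: inj_on_def)
    also have "\<dots> = (\<Prod>p\<in>D1 \<union> D2. e p t)" by (rule prod.union_disjoint[symmetric]) (use fin disj in auto)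
    finally show ?thesis .
  qed
  have indD: "indep_vars (\<lambda>_. borel) e (D1 \<union> D2)" using indep_vars_subset[OF ind] D1I by auto
  have intD: "\<And>p. p \<in> D1 \<union> D2 \<Longrightarrow> integrable M (e p)" using int D1I by auto
  show "integrable M (\<lambda>t. (\<Prod>j=1..n. e (j, \<sigma> j) t) * (\<Prod>j=1..n. e (j, \<tau> j) t))"
    unfolding eq using indep_vars_integrable[OF _ indD intD] fin by auto
  have "expectation (\<lambda>t. (\<Prod>j=1..n. e (j, \<sigma> j) t) * (\<Prod>j=1..n. e (j, \<tau> j) t))
      = (\<Prod>p\<in>D1 \<union> D2. expectation (e p))"
    unfolding eq using indep_vars_lebesgue_integral[OF _ indD intD] fin by auto
  also have "\<dots> = (if \<sigma> = \<tau> then 1 else 0)"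
  proof (cases "\<sigma> = \<tau>")
    case True
    then have "J = {}" unfolding J_def by auto
    then show ?thesis using True by (simp add: D1_def D2_def)
  next
    case False
    then obtain j where "j \<in> {1..n}" "\<sigma> j \<noteq> \<tau> j"
      using \<sigma> \<tau> unfolding Sig_def by (metis PiE_ext)
    then have "(j, \<sigma> j) \<in> D1" unfolding D1_def J_def by auto
    then have "\<exists>p\<in>D1 \<union> D2. expectation (e p) = 0" using mean D1I by blast
    then show ?thesis using False fin by (simp add: prod_zero_iff)
  qed
  finally show "expectation (\<lambda>t. (\<Prod>j=1..n. e (j, \<sigma> j) t) * (\<Prod>j=1..n. e (j, \<tau> j) t))
          = (if \<sigma> = \<tau> then 1 else 0)" .
qed

end


context prob_space
begin

lemma coef_sq:
  fixes e :: "nat \<times> nat \<Rightarrow> 'a \<Rightarrow> real"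
  assumes ind: "indep_vars (\<lambda>_. borel) e ({1..n} \<times> {1..d})"
    and pm: "\<And>p t. p \<in> {1..n} \<times> {1..d} \<Longrightarrow> e p t = 1 \<or> e p t = -1"
    and int: "\<And>p. p \<in> {1..n} \<times> {1..d} \<Longrightarrow> integrable M (e p)"
    and mean: "\<And>p. p \<in> {1..n} \<times> {1..d} \<Longrightarrow> expectation (e p) = 0"
  shows "integrable M (\<lambda>t. (coef n d (\<lambda>j k. e (j,k) t) m)\<^sup>2)"
    and "expectation (\<lambda>t. (coef n d (\<lambda>j k. e (j,k) t) m)\<^sup>2) = card {\<sigma>\<in>Sig n d. cnt n d \<sigma> = m}"
proof -
  define S where "S = {\<sigma>\<in>Sig n d. cnt n d \<sigma> = m}"
  have finS: "finite S" unfolding S_def by simp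
  have SS: "S \<subseteq> Sig n d" unfolding S_def by auto
  have eq: "(coef n d (\<lambda>j k. e (j,k) t) m)\<^sup>2 =
     (\<Sum>\<sigma>\<in>S. \<Sum>\<tau>\<in>S. (\<Prod>j=1..n. e (j, \<sigma> j) t) * (\<Prod>j=1..n. e (j, \<tau> j) t))" for t
    unfolding coef_def S_def[symmetric] power2_eq_square by (simp add: sum_product)
  have pint: "integrable M (\<lambda>t. (\<Prod>j=1..n. e (j, \<sigma> j) t) * (\<Prod>j=1..n. e (j, \<tau> j) t))"
    if "\<sigma> \<in> S" "\<tau> \<in> S" for \<sigma> \<tau>
    using pair_expect(1)[OF ind pm int mean] that SS by blast
  show "integrable M (\<lambda>t. (coef n d (\<lambda>j k. e (j,k) t) m)\<^sup>2)"
    unfolding eq using pint by (simp add: Bochner_Integration.integrable_sum)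
  have "expectation (\<lambda>t. (coef n d (\<lambda>j k. e (j,k) t) m)\<^sup>2)
     = (\<Sum>\<sigma>\<in>S. \<Sum>\<tau>\<in>S. expectation (\<lambda>t. (\<Prod>j=1..n. e (j, \<sigma> j) t) * (\<Prod>j=1..n. e (j, \<tau> j) t)))"
  proof -
    have pint2: "integrable M (\<lambda>t. \<Sum>\<tau>\<in>S. (\<Prod>j=1..n. e (j, \<sigma> j) t) * (\<Prod>j=1..n. e (j, \<tau> j) t))"
      if "\<sigma> \<in> S" for \<sigma> using pint that by (simp add: Bochner_Integration.integrable_sum)
    show ?thesis unfolding eq
      apply (subst Bochner_Integration.integral_sum[OF pint2], assumption)
      apply (rule sum.cong[OF refl])
      apply (rule Bochner_Integration.integral_sum)
      apply (rule pint, assumption+)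
      done
  qed
  also have "\<dots> = (\<Sum>\<sigma>\<in>S. \<Sum>\<tau>\<in>S. if \<sigma> = \<tau> then 1 else 0)"
    using pair_expect(2)[OF ind pm int mean] SS by (intro sum.cong refl) blast
  also have "\<dots> = card S" using finS by simp
  finally show "expectation (\<lambda>t. (coef n d (\<lambda>j k. e (j,k) t) m)\<^sup>2) = card {\<sigma>\<in>Sig n d. cnt n d \<sigma> = m}"
    unfolding S_def .
qed

end

theorem lemma3p5:
  fixes M :: "'a measure" and n d :: nat and eps :: "nat \<Rightarrow> nat \<Rightarrow> 'a \<Rightarrow> real" and R :: real
  assumes "prob_space M"
    and "n \<ge> 1" and "d \<ge> 1"
    and "prob_space.indep_vars M (\<lambda>_. borel) (\<lambda>p. eps (fst p) (snd p)) ({1..n} \<times> {1..d})"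
    and "\<And>j k. j \<in> {1..n} \<Longrightarrow> k \<in> {1..d} \<Longrightarrow> measure M {t \<in> space M. eps j k t = 1} = 1/2"
    and "\<And>j k. j \<in> {1..n} \<Longrightarrow> k \<in> {1..d} \<Longrightarrow> measure M {t \<in> space M. eps j k t = -1} = 1/2"
    and "R > 0"
  shows "measure M {t \<in> space M. Fnorm n d eps t > 2 * R} < (24 * real n) ^ d * real d ^ n / R\<^sup>2"
proof -
  interpret prob_space M by fact
  define I where "I = {1..n} \<times> {1..d}"
  define X where "X = (\<lambda>p. eps (fst p) (snd p))"
  define f :: "real \<Rightarrow> real" where "f = (\<lambda>x. if x = 1 then 1 else -1)"
  define e where "e = (\<lambda>p. f \<circ> X p)"
  have indX: "indep_vars (\<lambda>_. borel) X I" using assms(4) unfolding X_def I_def .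
  have fm: "f \<in> borel_measurable borel" unfolding f_def by measurable
  have ind: "indep_vars (\<lambda>_. borel) e I"
    unfolding e_def by (rule indep_vars_compose[OF indX]) (use fm in auto)
  have Xm: "X p \<in> borel_measurable M" if "p \<in> I" for p
    using indX that unfolding indep_vars_def by auto
  have em: "e p \<in> borel_measurable M" if "p \<in> I" for p
    using ind that unfolding indep_vars_def by auto
  have pm: "e p t = 1 \<or> e p t = -1" for p t unfolding e_def f_def by auto
  have int: "integrable M (e p)" if "p \<in> I" for p
  proof (rule integrable_const_bound[where B=1])
    have "\<bar>e p t\<bar> \<le> 1" for t using pm[of p t] by auto
    then show "AE x in M. norm (e p x) \<le> 1" by simp
  qed (rule em[OF that])
  have m1: "prob {t \<in> space M. X p t = 1} = 1/2" if "p \<in> I" for p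
    using assms(5)[of "fst p" "snd p"] that unfolding I_def X_def by (auto simp: mem_Times_iff)
  have m2: "prob {t \<in> space M. X p t = -1} = 1/2" if "p \<in> I" for p
    using assms(6)[of "fst p" "snd p"] that unfolding I_def X_def by (auto simp: mem_Times_iff)
  have mean: "expectation (e p) = 0" if p: "p \<in> I" for p
  proof -
    define A where "A = {t \<in> space M. X p t = 1}"
    have A: "A \<in> sets M" unfolding A_def using Xm[OF p] by measurable
    have "expectation (e p) = expectation (\<lambda>t. 2 * indicator A t - 1)"
      by (rule Bochner_Integration.integral_cong) (auto simp: e_def f_def A_def indicator_def)
    also have "\<dots> = 2 * prob A - 1"
      using A by (subst Bochner_Integration.integral_diff)
          (auto simp: prob_space emeasure_eq_measure intro!: integrable_real_indicator)
    also have "\<dots> = 0" using m1[OF p] unfolding A_def by simp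
    finally show ?thesis .
  qed
  note CS = coef_sq[OF ind[unfolded I_def] pm int[unfolded I_def] mean[unfolded I_def]]
  define c where "c = (\<lambda>m t. coef n d (\<lambda>j k. e (j,k) t) m)"
  define G where "G = (\<lambda>t. real (card (Ms n d)) * (\<Sum>m\<in>Ms n d. (c m t)\<^sup>2))"
  have Gint: "integrable M G"
    unfolding G_def c_def using CS(1) by (simp add: Bochner_Integration.integrable_sum)
  have EG: "expectation G = real ((n+1)^d) * real (d ^ n)"
  proof -
    have "expectation G = real (card (Ms n d)) * (\<Sum>m\<in>Ms n d. expectation (\<lambda>t. (c m t)\<^sup>2))"
      unfolding G_def c_def using CS(1)
      by (simp add: Bochner_Integration.integral_sum)
    also have "\<dots> = real (card (Ms n d)) * real (\<Sum>m\<in>Ms n d. card {\<sigma>\<in>Sig n d. cnt n d \<sigma> = m})"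
      unfolding c_def of_nat_sum by (intro arg_cong2[where f="(*)"] refl sum.cong CS(2))
    also have "\<dots> = real ((n+1)^d) * real (d ^ n)" by (simp only: sum_card_fibers card_Ms)
    finally show ?thesis .
  qed
  have AEp: "AE t in M. X p t = 1 \<or> X p t = -1" if p: "p \<in> I" for p
  proof -
    define A where "A = {t \<in> space M. X p t = 1}"
    define B where "B = {t \<in> space M. X p t = -1}"
    have AB: "A \<in> sets M" "B \<in> sets M" unfolding A_def B_def using Xm[OF p] by measurable
    have "prob (A \<union> B) = prob A + prob B"
      by (rule finite_measure_Union[OF AB]) (auto simp: A_def B_def)
    then have "prob (A \<union> B) = 1" using m1[OF p] m2[OF p] unfolding A_def B_def by simp
    from AE_prob_1[OF this] show ?thesis unfolding A_def B_def by auto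
  qed
  have AE: "AE t in M. \<forall>p\<in>I. X p t = 1 \<or> X p t = -1"
    by (rule AE_finite_allI) (auto simp: I_def intro: AEp)
  define B where "B = {t \<in> space M. 4 * R\<^sup>2 \<le> G t}"
  have Bs: "B \<in> sets M" unfolding B_def using borel_measurable_integrable[OF Gint] by measurable
  have incl: "AE t in M. t \<in> {t \<in> space M. Fnorm n d eps t > 2 * R} \<longrightarrow> t \<in> B"
    using AE
  proof eventually_elim
    case (elim t)
    show ?case
    proof
      assume t: "t \<in> {t \<in> space M. Fnorm n d eps t > 2 * R}"
      have agree: "eps j k t = e (j,k) t" if "j \<in> {1..n}" "k \<in> {1..d}" for j k
        using elim that unfolding e_def f_def X_def I_def by force
      have "Fnorm n d eps t \<le> (\<Sum>m\<in>Ms n d. \<bar>c m t\<bar>)"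
        using Fnorm_bound[OF assms(3), of n eps t] coef_cong[of n d "\<lambda>j k. eps j k t" "\<lambda>j k. e (j,k) t"] agree
        unfolding c_def by simp
      then have "2 * R < (\<Sum>m\<in>Ms n d. \<bar>c m t\<bar>)" using t by simp
      then have "(2 * R)\<^sup>2 < (\<Sum>m\<in>Ms n d. \<bar>c m t\<bar>)\<^sup>2"
        using assms(7) by (intro power_strict_mono) auto
      also have "\<dots> = (\<Sum>m\<in>Ms n d. 1 * \<bar>c m t\<bar>)\<^sup>2" by simp
      also have "\<dots> \<le> (\<Sum>m\<in>Ms n d. 1\<^sup>2) * (\<Sum>m\<in>Ms n d. \<bar>c m t\<bar>\<^sup>2)"
        by (rule Cauchy_Schwarz_ineq_sum)
      also have "\<dots> = G t" unfolding G_def by simp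
      finally show "t \<in> B" using t unfolding B_def by (simp add: power_mult_distrib)
    qed
  qed
  have "measure M {t \<in> space M. Fnorm n d eps t > 2 * R} \<le> measure M B"
    by (rule finite_measure_mono_AE[OF incl Bs])
  also have "\<dots> \<le> expectation G / (4 * R\<^sup>2)"
    unfolding B_def
  proof (rule integral_Markov_inequality_measure[OF Gint])
    have "0 \<le> G t" for t unfolding G_def by (intro mult_nonneg_nonneg sum_nonneg) auto
    then show "AE x in M. 0 \<le> G x" by simp
    show "0 < 4 * R\<^sup>2" using assms(7) by simp
  qed (rule sets.top)
  also have "\<dots> < (24 * real n) ^ d * real d ^ n / R\<^sup>2"
  proof -
    have dn: "real d ^ n > 0" using assms(3) by simp
    have "real (n+1) ^ d \<le> (24 * real n) ^ d"
      using assms(2) by (intro power_mono) auto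
    then have "real ((n+1)^d) * real (d^n) \<le> (24 * real n) ^ d * real d ^ n"
      using dn by (simp add: mult_right_mono)
    moreover have "(24 * real n) ^ d * real d ^ n > 0" using dn assms(2) by simp
    ultimately show ?thesis unfolding EG using assms(7)
      by (simp add: divide_simps)
  qed
  finally show ?thesis .
qed


end
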